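(* Let $Q$ be a square-free word of length $n\geq 2$. Then for every position $p\in\{1,\dots,n\}$, the number of factors of $Q$ that are almost-squares and start at the $p$-th letter of $Q$ is less than $2\log_{5/4} n$.
   Context: Words are finite sequences of letters. A factor of $Q$ is a contiguous subword; factors starting at the same position are distinguished by their lengths. An extension of a word $W$ over an alphabet $\mathbb{A}$ is a word $W_1xW_2$ with $W=W_1W_2$ ($W_1,W_2$ possibly empty) and $x\in\mathbb{A}$. An almost-square is a word of the form $WW'$ where $W'$ is either an extension of $W$ or is obtained by deleting one letter from $W$. A square is a nonempty word of the form $YY$; a word is square-free if none of its factors is a square. *)

theory Defs
  imports Complex_Main
begin

definition is_factor :: "'a list \<Rightarrow> 'a list \<Rightarrow> bool" where
  "is_factor F Q \<longleftrightarrow> (\<exists>u v. Q = u @ F @ v)"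

definition square_free :: "'a list \<Rightarrow> bool" where
  "square_free Q \<longleftrightarrow> \<not> (\<exists>Y. Y \<noteq> [] \<and> is_factor (Y @ Y) Q)"

definition is_extension :: "'a list \<Rightarrow> 'a list \<Rightarrow> bool" where
  "is_extension V W \<longleftrightarrow> (\<exists>W1 W2 x. W = W1 @ W2 \<and> V = W1 @ [x] @ W2)"

definition almost_square :: "'a list \<Rightarrow> bool" where
  "almost_square U \<longleftrightarrow> (\<exists>W W'. U = W @ W' \<and>
      (is_extension W' W \<or> is_extension W W'))"

text \<open>Number of almost-square factors of Q starting at (1-based) position p;
  factors starting at p are identified by their length l.\<close>
definition almost_square_count :: "'a list \<Rightarrow> nat \<Rightarrow> nat" where
  "almost_square_count Q p =
     card {l. p - 1 + l \<le> length Q \<and> almost_square (take l (drop (p - 1) Q))}"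

end

theory Submission
  imports Defs
begin


definition struc :: "'a list \<Rightarrow> nat \<Rightarrow> nat \<Rightarrow> nat \<Rightarrow> bool" where
  "struc w m a e \<longleftrightarrow> a \<le> m \<and> e \<le> 1 \<and> (\<forall>i<a. w!i = w!(i+m+e)) \<and>
     (\<forall>i. a+e \<le> i \<longrightarrow> i < m+e \<longrightarrow> w!i = w!(i+m+1-e))"

lemma alsq_struc:
  assumes "almost_square U"
  shows "\<exists>m a e. length U = 2*m+1 \<and> struc U m a e"
proof -
  obtain W W' where U: "U = W @ W'" and h: "is_extension W' W \<or> is_extension W W'"
    using assms unfolding almost_square_def by blast
  from h show ?thesis
  proof
    assume "is_extension W' W"
    then obtain W1 W2 x where W: "W = W1 @ W2" and W': "W' = W1 @ [x] @ W2"
      unfolding is_extension_def by blast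
    define m where "m = length W1 + length W2"
    have "length U = 2*m+1" using U W W' m_def by simp
    moreover have "struc U m (length W1) 0"
      unfolding struc_def
    proof (intro conjI allI impI)
      fix i assume "i < length W1"
      then show "U ! i = U ! (i + m + 0)" using U W W' m_def
        by (simp add: nth_append)
    next
      fix i assume "length W1 + 0 \<le> i" "i < m + 0"
      then obtain j where j: "i = length W1 + j" "j < length W2" using m_def
        by (intro that[of "i - length W1"]) auto
      have "U ! (i + m + 1 - 0) = U ! (length (W1 @ W2 @ W1 @ [x]) + j)"
        using j m_def by (simp add: algebra_simps)
      also have "\<dots> = W2 ! j"
      proof -
        have "U = (W1 @ W2 @ W1 @ [x]) @ W2" using U W W' by simp
        then show ?thesis by (simp only: nth_append_length_plus)
      qed
      also have "W2 ! j = U ! i"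
      proof -
        have "U = W1 @ (W2 @ W1 @ [x] @ W2)" using U W W' by simp
        then show ?thesis using j by (simp add: nth_append)
      qed
      finally show "U ! i = U ! (i + m + 1 - 0)" by simp
    qed (auto simp: m_def)
    ultimately show ?thesis by blast
  next
    assume "is_extension W W'"
    then obtain W1 W2 x where W': "W' = W1 @ W2" and W: "W = W1 @ [x] @ W2"
      unfolding is_extension_def by blast
    define m where "m = length W1 + length W2"
    have "length U = 2*m+1" using U W W' m_def by simp
    moreover have "struc U m (length W1) 1"
      unfolding struc_def
    proof (intro conjI allI impI)
      fix i assume "i < length W1"
      then show "U ! i = U ! (i + m + 1)" using U W W' m_def
        by (simp add: nth_append)
    next
      fix i assume "length W1 + 1 \<le> i" "i < m + 1"
      then obtain j where j: "i = length W1 + 1 + j" "j < length W2" using m_def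
        by (intro that[of "i - length W1 - 1"]) auto
      have "U ! (i + m + 1 - 1) = U ! (length (W1 @ [x] @ W2 @ W1) + j)"
        using j m_def by (simp add: algebra_simps)
      also have "\<dots> = W2 ! j"
      proof -
        have "U = (W1 @ [x] @ W2 @ W1) @ W2" using U W W' by simp
        then show ?thesis by (simp only: nth_append_length_plus)
      qed
      also have "W2 ! j = U ! i"
      proof -
        have "U = (W1 @ [x]) @ (W2 @ W1 @ W2)" using U W W' by simp
        then show ?thesis using j by (simp add: nth_append)
      qed
      finally show "U ! i = U ! (i + m + 1 - 1)" by simp
    qed (auto simp: m_def)
    ultimately show ?thesis by blast
  qed
qed

lemma struc_take:
  assumes "struc (take l w) m a e" "l = 2*m+1" "l \<le> length w"
  shows "struc w m a e"
  using assms unfolding struc_def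
  by (auto simp: nth_take)



lemma sq_contra:
  assumes sf: "square_free w" and d: "0 < d" and len: "x + 2*d \<le> length w"
    and eq: "\<forall>t<d. w!(x+t) = w!(x+d+t)"
  shows False
proof -
  define z where "z = drop x w"
  define Y where "Y = take d z"
  have lz: "2*d \<le> length z" using len z_def by simp
  have "take d (drop d z) = Y"
  proof (rule nth_equalityI)
    show "length (take d (drop d z)) = length Y" using lz Y_def by simp
  next
    fix t assume "t < length (take d (drop d z))"
    then have t: "t < d" using lz by simp
    then show "take d (drop d z) ! t = Y ! t"
      using eq lz len unfolding Y_def z_def by (simp add: add.commute add.left_commute)
  qed
  then have "take (2*d) z = Y @ Y"
    unfolding Y_def by (metis mult_2 take_add)
  then have "w = take x w @ (Y @ Y) @ drop (2*d) z"
    unfolding z_def by (metis append_take_drop_id)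
  then have "is_factor (Y @ Y) w" unfolding is_factor_def by blast
  moreover have "Y \<noteq> []" using d lz Y_def by (cases z) auto
  ultimately show False using sf unfolding square_free_def by blast
qed

lemma interval_bound:
  assumes sf: "square_free w" and s: "su < sv"
    and rel: "\<forall>i. lo \<le> i \<longrightarrow> i < hi \<longrightarrow> w!(i+su) = w!(i+sv)"
    and len: "hi + sv \<le> length w"
  shows "hi < lo + (sv - su)"
proof (rule ccontr)
  assume "\<not> hi < lo + (sv - su)"
  then have h: "lo + (sv - su) \<le> hi" by simp
  show False
  proof (rule sq_contra[OF sf, of "sv - su" "lo + su"])
    show "0 < sv - su" using s by simp
    show "lo + su + 2 * (sv - su) \<le> length w" using h len s by simp
    show "\<forall>t<sv - su. w ! (lo + su + t) = w ! (lo + su + (sv - su) + t)"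
    proof (intro allI impI)
      fix t assume "t < sv - su"
      then have "w!((lo+t)+su) = w!((lo+t)+sv)" using rel h by simp
      then show "w ! (lo + su + t) = w ! (lo + su + (sv - su) + t)" using s
        by (simp add: algebra_simps)
    qed
  qed
qed

lemma core:
  assumes sf: "square_free w" and u: "struc w m a e" and v: "struc w M b f"
    and mM: "m + 2 \<le> M" and len: "2*M+1 \<le> length w"
  shows "4*m \<le> 3*M + 2"
proof -
  have ae: "a \<le> m" "e \<le> 1" and u1: "\<forall>i<a. w!i = w!(i+m+e)"
    and u2: "\<forall>i. a+e \<le> i \<longrightarrow> i < m+e \<longrightarrow> w!i = w!(i+m+1-e)"
    using u unfolding struc_def by auto
  have bf: "b \<le> M" "f \<le> 1" and v1: "\<forall>i<b. w!i = w!(i+M+f)"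
    and v2: "\<forall>i. b+f \<le> i \<longrightarrow> i < M+f \<longrightarrow> w!i = w!(i+M+1-f)"
    using v unfolding struc_def by auto
  have I1: "min a b < 0 + ((M+f) - (m+e))"
  proof (rule interval_bound[OF sf])
    show "m + e < M + f" using mM ae by simp
    show "\<forall>i. 0 \<le> i \<longrightarrow> i < min a b \<longrightarrow> w ! (i + (m + e)) = w ! (i + (M + f))"
    proof (intro allI impI)
      fix i :: nat assume "0 \<le> i" "i < min a b"
      then have ii: "i < a" "i < b" by simp_all
      have "w!i = w!(i+m+e)" by (rule u1[rule_format, OF ii(1)])
      moreover have "w!i = w!(i+M+f)" by (rule v1[rule_format, OF ii(2)])
      ultimately have "w!(i+m+e) = w!(i+M+f)" by simp
      then show "w ! (i + (m + e)) = w ! (i + (M + f))" by (simp only: add.assoc)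
    qed
    show "min a b + (M + f) \<le> length w" using ae bf len mM by simp
  qed
  have I3: "m < (max a b + 1) + ((M+1-f) - (m+1-e))"
  proof (rule interval_bound[OF sf])
    show "m + 1 - e < M + 1 - f" using mM ae bf by simp
    show "\<forall>i. max a b + 1 \<le> i \<longrightarrow> i < m \<longrightarrow> w ! (i + (m + 1 - e)) = w ! (i + (M + 1 - f))"
    proof (intro allI impI)
      fix i assume "max a b + 1 \<le> i" "i < m"
        have h1: "w!i = w!(i+m+1-e)" apply (rule u2[rule_format]) using \<open>_ \<le> i\<close> \<open>i < _\<close> ae bf mM by (simp_all add: max_def split: if_splits)
        have h2: "w!i = w!(i+M+1-f)" apply (rule v2[rule_format]) using \<open>_ \<le> i\<close> \<open>i < _\<close> ae bf mM by (simp_all add: max_def split: if_splits)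
        have "w!(i+m+1-e) = w!(i+M+1-f)" by (rule trans[OF sym[OF h1] h2])
      then show "w ! (i + (m + 1 - e)) = w ! (i + (M + 1 - f))" using ae bf
        by (simp add: add.assoc)
    qed
    show "m + (M + 1 - f) \<le> length w" using len mM bf by simp
  qed
  have I2: "min (max a b) m \<le> min a b + (M - m) + 1"
  proof (cases "a \<le> b")
    case True
    have "min b m < (a + 1) + ((M+f) - (m+1-e))"
    proof (rule interval_bound[OF sf])
      show "m + 1 - e < M + f" using mM ae by simp
      show "\<forall>i. a + 1 \<le> i \<longrightarrow> i < min b m \<longrightarrow> w ! (i + (m + 1 - e)) = w ! (i + (M + f))"
      proof (intro allI impI)
        fix i assume "a + 1 \<le> i" "i < min b m"
        have h1: "w!i = w!(i+m+1-e)" apply (rule u2[rule_format]) using \<open>_ \<le> i\<close> \<open>i < _\<close> ae bf mM by (simp_all add: max_def split: if_splits)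
        have h2: "w!i = w!(i+M+f)" apply (rule v1[rule_format]) using \<open>_ \<le> i\<close> \<open>i < _\<close> ae bf mM by (simp_all add: max_def split: if_splits)
        have "w!(i+m+1-e) = w!(i+M+f)" by (rule trans[OF sym[OF h1] h2])
        then show "w ! (i + (m + 1 - e)) = w ! (i + (M + f))" using ae bf
          by (simp add: add.assoc)
      qed
      show "min b m + (M + f) \<le> length w" using len mM bf by simp
    qed
    then show ?thesis using True ae bf by (simp add: min_def max_def split: if_splits)
  next
    case False
    have "a < (b + 1) + ((M+1-f) - (m+e))"
    proof (rule interval_bound[OF sf])
      show "m + e < M + 1 - f" using mM ae bf by simp
      show "\<forall>i. b + 1 \<le> i \<longrightarrow> i < a \<longrightarrow> w ! (i + (m + e)) = w ! (i + (M + 1 - f))"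
      proof (intro allI impI)
        fix i assume "b + 1 \<le> i" "i < a"
        have h1: "w!i = w!(i+m+e)" apply (rule u1[rule_format]) using \<open>_ \<le> i\<close> \<open>i < _\<close> ae bf mM by (simp_all add: max_def split: if_splits)
        have h2: "w!i = w!(i+M+1-f)" apply (rule v2[rule_format]) using \<open>_ \<le> i\<close> \<open>i < _\<close> ae bf mM by (simp_all add: max_def split: if_splits)
        have "w!(i+m+e) = w!(i+M+1-f)" by (rule trans[OF sym[OF h1] h2])
        then show "w ! (i + (m + e)) = w ! (i + (M + 1 - f))" using ae bf
          by (simp add: add.assoc)
      qed
      show "a + (M + 1 - f) \<le> length w" using len mM bf ae by simp
    qed
    then show ?thesis using False ae bf by simp
  qed
  have J1: "min a b \<le> M - m" using I1 ae bf mM by simp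
  have J3: "m \<le> max a b + M - m + 1" using I3 ae bf mM by simp
  show ?thesis
  proof (cases "a \<le> b")
    case True
    then have "min a b = a" "max a b = b" by simp_all
    then show ?thesis using J1 I2 J3 mM ae True by (cases "b \<le> m") (simp_all add: min_def; arith)+
  next
    case False
    then have "min a b = b" "max a b = a" "min a m = a" using ae by simp_all
    then show ?thesis using J1 I2 J3 mM ae False by simp
  qed
qed



lemma odd_gap: "odd (x::nat) \<Longrightarrow> odd y \<Longrightarrow> x < y \<Longrightarrow> x + 2 \<le> y"
  by (auto elim!: oddE)

lemma max_rm:
  assumes "finite S" "2 \<le> card S"
  shows "finite (S - {Max S}) \<and> card (S - {Max S}) = card S - 1 \<and> S - {Max S} \<noteq> {}
    \<and> Max (S - {Max S}) < Max S \<and> Max (S - {Max S}) \<in> S"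
proof -
  have ne: "S \<noteq> {}" using assms by auto
  have mS: "Max S \<in> S" using assms ne by simp
  have c: "card (S - {Max S}) = card S - 1" using mS assms by simp
  have f1: "finite (S - {Max S})" using assms by simp
  have "card (S - {Max S}) \<noteq> 0" using c assms by simp
  then have ne1: "S - {Max S} \<noteq> {}" by (metis card.empty)
  have i1: "Max (S - {Max S}) \<in> S - {Max S}" using f1 ne1 by (rule Max_in)
  have le: "Max (S - {Max S}) \<le> Max S" using i1 assms by simp
  have lt: "Max (S - {Max S}) < Max S" using le_neq_trans[OF le] i1 by blast
  show ?thesis using c ne1 f1 lt i1 by blast
qed

lemma odd_max:
  "finite (S::nat set) \<Longrightarrow> \<forall>x\<in>S. odd x \<Longrightarrow> card S = n \<Longrightarrow> 1 \<le> n \<Longrightarrow> 2*n - 1 \<le> Max S"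
proof (induction n arbitrary: S)
  case 0
  then show ?case by simp
next
  case (Suc n)
  show ?case
  proof (cases "n = 0")
    case True
    have "S \<noteq> {}" using Suc.prems by auto
    then have "Max S \<in> S" using Suc.prems by simp
    then have "odd (Max S)" using Suc.prems by blast
    then have "1 \<le> Max S" by (cases "Max S") auto
    then show ?thesis using True by simp
  next
    case False
    have h: "finite (S - {Max S}) \<and> card (S - {Max S}) = card S - 1 \<and> S - {Max S} \<noteq> {}
      \<and> Max (S - {Max S}) < Max S \<and> Max (S - {Max S}) \<in> S"
      using max_rm[of S] Suc.prems False by simp
    then have a1: "2*n - 1 \<le> Max (S - {Max S})" using Suc.IH[of "S - {Max S}"] Suc.prems False by simp
    have "S \<noteq> {}" using Suc.prems by auto
    then have "Max S \<in> S" using Suc.prems by simp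
    then have "odd (Max S)" using Suc.prems by blast
    moreover have "odd (Max (S - {Max S}))" using h Suc.prems by blast
    ultimately have "Max (S - {Max S}) + 2 \<le> Max S" using h odd_gap by blast
    then show ?thesis using a1 False by simp
  qed
qed

lemma count_bound:
  "finite (S::nat set) \<Longrightarrow> \<forall>x\<in>S. odd x \<Longrightarrow> (\<forall>x\<in>S. \<forall>y\<in>S. x + 4 \<le> y \<longrightarrow> 4*x \<le> 3*y + 5)
   \<Longrightarrow> card S = n \<Longrightarrow> 2 \<le> n \<Longrightarrow> 5^n \<le> 4^n * (Max S - 1)^2"
proof (induction n arbitrary: S rule: less_induct)
  case (less n)
  have mx: "2*n - 1 \<le> Max S" using odd_max[of S n] less.prems by simp
  show ?case
  proof (cases "n \<le> 3")
    case True
    then have "n = 2 \<or> n = 3" using less.prems by auto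
    then show ?thesis
    proof
      assume n: "n = 2"
      then have "2 \<le> Max S - 1" using mx by simp
      then have "2^2 \<le> (Max S - 1)^2" by (rule power_mono) simp
      then show ?thesis using n by simp
    next
      assume n: "n = 3"
      then have "4 \<le> Max S - 1" using mx by simp
      then have "4^2 \<le> (Max S - 1)^2" by (rule power_mono) simp
      then show ?thesis using n by simp
    qed
  next
    case False
    define S1 where "S1 = S - {Max S}"
    define S2 where "S2 = S1 - {Max S1}"
    have h1: "finite S1 \<and> card S1 = n - 1 \<and> S1 \<noteq> {} \<and> Max S1 < Max S \<and> Max S1 \<in> S"
      using max_rm[of S] less.prems unfolding S1_def by simp
    have c1: "2 \<le> card S1" using h1 False by simp
    have h2': "finite S2 \<and> card S2 = card S1 - 1 \<and> S2 \<noteq> {} \<and> Max S2 < Max S1 \<and> Max S2 \<in> S1"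
      using max_rm[OF conjunct1[OF h1] c1] unfolding S2_def by blast
    have "card S2 = n - 2" using h2' h1 by simp
    then have h2: "finite S2 \<and> card S2 = n - 2 \<and> S2 \<noteq> {} \<and> Max S2 < Max S1 \<and> Max S2 \<in> S1"
      using h2' by blast
    have sub: "S2 \<subseteq> S" unfolding S2_def S1_def by auto
    have IH: "5^(n-2) \<le> 4^(n-2) * (Max S2 - 1)^2"
      apply (rule less.IH[of "n-2" S2])
      using h2 False less.prems sub by auto
    define x where "x = Max S2"
    define y where "y = Max S"
    have "S \<noteq> {}" using less.prems by auto
    then have "y \<in> S" unfolding y_def using less.prems by simp
    have "x \<in> S2" using h2 x_def Max_in by blast
    then have xS: "x \<in> S" using sub by blast
    have ox: "odd x" "odd (Max S1)" "odd y" using xS h1 \<open>y \<in> S\<close> less.prems by auto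
    have "x + 2 \<le> Max S1" using odd_gap[OF ox(1) ox(2)] h2 x_def by simp
    moreover have "Max S1 + 2 \<le> y" using odd_gap[OF ox(2) ox(3)] h1 y_def by simp
    ultimately have xy: "x + 4 \<le> y" by simp
    then have "4*x \<le> 3*y + 5" using less.prems xS \<open>y \<in> S\<close> by blast
    then have key: "5*(x-1) \<le> 4*(y-1)" using xy by (cases "x \<le> 17") auto
    have "(5*(x-1))^2 \<le> (4*(y-1))^2" using key by (rule power_mono) simp
    then have key2: "25*(x-1)^2 \<le> 16*(y-1)^2" by (simp add: power_mult_distrib)
    have n: "n = (n-2) + 2" using False by simp
    have "(5::nat)^n = 25 * 5^(n-2)" by (subst n) (simp add: power_add)
    also have "\<dots> \<le> 25 * (4^(n-2) * (x - 1)^2)" using IH x_def by simp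
    also have "\<dots> = 4^(n-2) * (25 * (x-1)^2)" by simp
    also have "\<dots> \<le> 4^(n-2) * (16*(y-1)^2)" using key2 by simp
    also have "\<dots> = 4^n * (y-1)^2" by (subst (2) n) (simp add: power_add)
    finally show ?thesis using y_def by simp
  qed
qed



lemma square_free_drop: "square_free Q \<Longrightarrow> square_free (drop k Q)"
  unfolding square_free_def is_factor_def
  by (metis append.assoc append_take_drop_id)

theorem mainTheorem6:
  fixes Q :: "'a list" and p :: nat
  assumes "square_free Q" and "length Q \<ge> 2" and "p \<in> {1..length Q}"
  shows "real (almost_square_count Q p) < 2 * log (5/4) (real (length Q))"
proof -
  define n where "n = length Q"
  define w where "w = drop (p - 1) Q"
  define S where "S = {l. p - 1 + l \<le> length Q \<and> almost_square (take l (drop (p - 1) Q))}"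
  have cnt: "almost_square_count Q p = card S" unfolding almost_square_count_def S_def by simp
  have sfw: "square_free w" unfolding w_def using assms(1) by (rule square_free_drop)
  have lw: "length w = n - (p - 1)" unfolding w_def n_def by simp
  have fin: "finite S" unfolding S_def by (rule finite_subset[of _ "{..length Q}"]) auto
  have memS: "\<exists>m a e. l = 2*m+1 \<and> l \<le> length w \<and> struc w m a e" if "l \<in> S" for l
  proof -
    have l1: "p - 1 + l \<le> length Q" and l2: "almost_square (take l w)"
      using that unfolding S_def w_def by auto
    have lle: "l \<le> length w" using l1 lw n_def by simp
    obtain m a e where "length (take l w) = 2*m+1" "struc (take l w) m a e"
      using alsq_struc[OF l2] by blast
    moreover then have "l = 2*m+1" using lle by simp
    ultimately show ?thesis using struc_take lle by blast
  qed
  have odd: "\<forall>x\<in>S. odd x" using memS by fastforce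
  have pair: "\<forall>x\<in>S. \<forall>y\<in>S. x + 4 \<le> y \<longrightarrow> 4*x \<le> 3*y + 5"
  proof (intro ballI impI)
    fix x y assume xS: "x \<in> S" and yS: "y \<in> S" and xy: "x + 4 \<le> y"
    obtain m a e where x: "x = 2*m+1" "struc w m a e" using memS[OF xS] by blast
    obtain M b f where y: "y = 2*M+1" "y \<le> length w" "struc w M b f" using memS[OF yS] by blast
    have "4*m \<le> 3*M + 2"
      by (rule core[OF sfw x(2) y(3)]) (use x y xy in simp_all)
    then show "4*x \<le> 3*y + 5" using x y by simp
  qed
  have bnd: "\<forall>x\<in>S. x \<le> n" using memS lw by fastforce
  have n2: "2 \<le> n" using assms(2) n_def by simp
  have nat_ineq: "5^card S < 4^card S * n^2"
  proof (cases "2 \<le> card S")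
    case True
    have "S \<noteq> {}" using True by auto
    then have "Max S \<le> n" using bnd fin by simp
    then have "Max S - 1 < n" using n2 by simp
    then have "(Max S - 1)^2 < n^2" by (simp add: power_strict_mono)
    then have "4^card S * (Max S - 1)^2 < 4^card S * n^2" by simp
    moreover have "5^card S \<le> 4^card S * (Max S - 1)^2"
      using count_bound[OF fin odd pair refl True] .
    ultimately show ?thesis by linarith
  next
    case False
    then have "card S = 0 \<or> card S = 1" by auto
    moreover have "4 \<le> n^2" using n2 power_mono[OF n2, of 2] by simp
    ultimately show ?thesis by auto
  qed
  have "real (5^card S) < real (4^card S * n^2)" using nat_ineq by linarith
  then have "(5/4::real)^card S < real n ^ 2"
    by (simp add: power_divide divide_less_eq mult.commute)
  then have "real (card S) < log (5/4) (real n ^ 2)"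
    by (rule less_log_of_power) simp
  also have "\<dots> = 2 * log (5/4) (real n)" by (simp add: log_nat_power)
  finally show ?thesis using cnt n_def by simp
qed

end
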